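(* Assume the setting in the context (in particular Assumption (A)). Let $\rho>0$, $r\in V_f(\rho)$ and $n\in\mathbb{R}$, and let $[z,m]=\mathcal{A}_d(r,n)$ be the output of Procedure $\mathcal{A}_d$. Then: (i) $f(z)\leq f(r)-\frac{1}{2L_f}\|g(r)\|_*^2$; (ii) $f(z)-f^*\leq\left(\frac{\bar n_\rho}{m+1}\right)^2(f(r)-f^* )$; (iii) if $n\in(0,\lceil 4\bar n_\rho\rceil]$, then $m\in[n,\lceil 4\bar n_\rho\rceil]$.
   Context: Let $f:\mathbb{R}^n\to(-\infty,\infty]$ be a proper closed convex function such that the problem $f^*=\min_{x\in\mathbb{R}^n}f(x)$ is solvable. Let $\Omega_f=\{x: f(x)=f^*\}$, fix a norm $\|\cdot\|$ on $\mathbb{R}^n$ with dual norm $\|y\|_*=\sup\{y^Tz:\|z\|\leq 1\}$, and for $x\in\mathbb{R}^n$ let $\bar x=\arg\min_{z\in\Omega_f}\|x-z\|$. For $\rho\geq0$ let $V_f(\rho)=\{x: f(x)-f^*\leq\rho\}$. Let $\mathcal{A}$ be an iterative algorithm: for $x_0\in\mathrm{dom} f$ and integer $k\geq1$, $\mathcal{A}(x_0,k)$ denotes its $k$-th iterate started from $x_0$ (and $\mathcal{A}(x_0,0)=x_0$). Assumption (A): (i) for every $\rho>0$ there is $\mu_\rho>0$ with $f(x_0)-f^*\geq\frac{\mu_\rho}{2}\|x_0-\bar x_0\|^2$ for all $x_0\in V_f(\rho)$; (ii) there exist $a_f>0$, $L_f>0$ and $g:\mathbb{R}^n\to\mathbb{R}^n$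 with $g(x)=0\iff x\in\Omega_f$ such that for every $x_0\in\mathrm{dom} f$: $f(\mathcal{A}(x_0,1))\leq f(x_0)-\frac{1}{2L_f}\|g(x_0)\|_*^2$ and $f(\mathcal{A}(x_0,k))-f^*\leq\frac{a_f}{(k+1)^2}\|x_0-\bar x_0\|^2$ for all $k\geq1$; (iii) $\bar n_\rho:=\max\{\frac12,\sqrt{2a_f/\mu_\rho}\}$. Procedure $\mathcal{A}_d(r,n)$ (input $r\in\mathrm{dom} f$, $n\in\mathbb{R}$): set $x_0=r$, $k=0$. Repeat: $k\gets k+1$; set $x_k=\mathcal{A}(x_0,k)$ if $f(\mathcal{A}(x_0,k))\leq f(x_{k-1})$, and $x_k=x_{k-1}$ otherwise; set $\ell=\lfloor k/2\rfloor$; until $k\geq n$ and $f(x_\ell)-f(x_k)\leq\frac13(f(x_0)-f(x_\ell))$. Output $z=x_k$, $m=k$. *)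

theory Defs
  imports "HOL-Analysis.Analysis"
begin

text \<open>An extended-real-valued proper closed convex function on R^n is represented by
  its finite part f :: 'a \<Rightarrow> real together with its effective domain D = dom f;
  outside D the function is understood to be +\<infinity>.\<close>

definition is_norm :: "('a::real_vector \<Rightarrow> real) \<Rightarrow> bool" where
  "is_norm N \<longleftrightarrow> (\<forall>x. N x = 0 \<longleftrightarrow> x = 0) \<and> (\<forall>x y. N (x + y) \<le> N x + N y)
     \<and> (\<forall>c x. N (c *\<^sub>R x) = \<bar>c\<bar> * N x)"

definition dual_norm :: "('a::real_inner \<Rightarrow> real) \<Rightarrow> 'a \<Rightarrow> real" where
  "dual_norm N y = Sup {y \<bullet> z | z. N z \<le> 1}"

definition proper_closed_convex :: "'a::euclidean_space set \<Rightarrow> ('a \<Rightarrow> real) \<Rightarrow> bool" where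
  "proper_closed_convex D f \<longleftrightarrow> D \<noteq> {} \<and> convex D \<and> convex_on D f
     \<and> closed {(x, t). x \<in> D \<and> f x \<le> t}"

definition fstar :: "'a set \<Rightarrow> ('a \<Rightarrow> real) \<Rightarrow> real" where
  "fstar D f = Inf (f ` D)"

definition Omega :: "'a set \<Rightarrow> ('a \<Rightarrow> real) \<Rightarrow> 'a set" where
  "Omega D f = {x \<in> D. f x = fstar D f}"

definition distN :: "('a::real_vector \<Rightarrow> real) \<Rightarrow> 'a set \<Rightarrow> ('a \<Rightarrow> real) \<Rightarrow> 'a \<Rightarrow> real" where
  "distN N D f x = Inf ((\<lambda>z. N (x - z)) ` Omega D f)"

definition Vf :: "'a set \<Rightarrow> ('a \<Rightarrow> real) \<Rightarrow> real \<Rightarrow> 'a set" where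
  "Vf D f \<rho> = {x \<in> D. f x - fstar D f \<le> \<rho>}"

definition nbar :: "real \<Rightarrow> real \<Rightarrow> real" where
  "nbar a \<mu> = max (1/2) (sqrt (2 * a / \<mu>))"

fun Ad_seq :: "('a \<Rightarrow> real) \<Rightarrow> ('a \<Rightarrow> nat \<Rightarrow> 'a) \<Rightarrow> 'a \<Rightarrow> nat \<Rightarrow> 'a" where
  "Ad_seq f A r 0 = r"
| "Ad_seq f A r (Suc k) =
     (if f (A r (Suc k)) \<le> f (Ad_seq f A r k) then A r (Suc k) else Ad_seq f A r k)"

definition Ad_stop :: "('a \<Rightarrow> real) \<Rightarrow> ('a \<Rightarrow> nat \<Rightarrow> 'a) \<Rightarrow> 'a \<Rightarrow> real \<Rightarrow> nat \<Rightarrow> bool" where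
  "Ad_stop f A r n k \<longleftrightarrow> 1 \<le> k \<and> n \<le> real k \<and>
     f (Ad_seq f A r (k div 2)) - f (Ad_seq f A r k)
       \<le> (1/3) * (f (Ad_seq f A r 0) - f (Ad_seq f A r (k div 2)))"

definition Ad_m :: "('a \<Rightarrow> real) \<Rightarrow> ('a \<Rightarrow> nat \<Rightarrow> 'a) \<Rightarrow> 'a \<Rightarrow> real \<Rightarrow> nat" where
  "Ad_m f A r n = (LEAST k. Ad_stop f A r n k)"

definition Ad_z :: "('a \<Rightarrow> real) \<Rightarrow> ('a \<Rightarrow> nat \<Rightarrow> 'a) \<Rightarrow> 'a \<Rightarrow> real \<Rightarrow> 'a" where
  "Ad_z f A r n = Ad_seq f A r (Ad_m f A r n)"

end

theory Submission
  imports Defs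
begin

theorem mainTheorem2:
  fixes D :: "'a::euclidean_space set" and f :: "'a \<Rightarrow> real"
    and N :: "'a \<Rightarrow> real" and A :: "'a \<Rightarrow> nat \<Rightarrow> 'a" and g :: "'a \<Rightarrow> 'a"
    and \<mu> :: "real \<Rightarrow> real" and a L \<rho> n :: real and r :: 'a
  assumes pcc: "proper_closed_convex D f"
    and solvable: "\<exists>x\<in>D. \<forall>y\<in>D. f x \<le> f y"
    and normN: "is_norm N"
    and A0: "\<And>x0. A x0 0 = x0"
    and A_i: "\<And>\<rho>'. \<rho>' > 0 \<Longrightarrow> \<mu> \<rho>' > 0 \<and>
               (\<forall>x0\<in>Vf D f \<rho>'. f x0 - fstar D f \<ge> \<mu> \<rho>' / 2 * (distN N D f x0)\<^sup>2)"
    and a_pos: "a > 0" and L_pos: "L > 0"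
    and g_zero: "\<And>x. g x = 0 \<longleftrightarrow> x \<in> Omega D f"
    and A_descent: "\<And>x0. x0 \<in> D \<Longrightarrow> A x0 1 \<in> D \<and>
               f (A x0 1) \<le> f x0 - 1 / (2 * L) * (dual_norm N (g x0))\<^sup>2"
    and A_rate: "\<And>x0 k. x0 \<in> D \<Longrightarrow> k \<ge> 1 \<Longrightarrow> A x0 k \<in> D \<and>
               f (A x0 k) - fstar D f \<le> a / (real k + 1)\<^sup>2 * (distN N D f x0)\<^sup>2"
    and rho_pos: "\<rho> > 0"
    and r_in: "r \<in> Vf D f \<rho>"
  shows "(\<exists>k. Ad_stop f A r n k)
    \<and> f (Ad_z f A r n) \<le> f r - 1 / (2 * L) * (dual_norm N (g r))\<^sup>2
    \<and> f (Ad_z f A r n) - fstar D f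
        \<le> (nbar a (\<mu> \<rho>) / (real (Ad_m f A r n) + 1))\<^sup>2 * (f r - fstar D f)
    \<and> (0 < n \<and> n \<le> real_of_int \<lceil>4 * nbar a (\<mu> \<rho>)\<rceil> \<longrightarrow>
         n \<le> real (Ad_m f A r n) \<and> real (Ad_m f A r n) \<le> real_of_int \<lceil>4 * nbar a (\<mu> \<rho>)\<rceil>)"
proof -
  define x where "x = Ad_seq f A r"
  define fs where "fs = fstar D f"
  define nb where "nb = nbar a (\<mu> \<rho>)"
  define mu where "mu = \<mu> \<rho>"
  have rD: "r \<in> D" using r_in by (simp add: Vf_def)
  obtain x0 where x0: "x0 \<in> D" "\<forall>y\<in>D. f x0 \<le> f y" using solvable by blast
  have fs_eq: "fs = f x0"
    unfolding fs_def fstar_def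
    by (rule cInf_eq_minimum) (use x0 in auto)
  have fs_le: "\<And>y. y \<in> D \<Longrightarrow> fs \<le> f y" using x0 fs_eq by auto
  have xD: "x k \<in> D" for k
    by (induction k) (auto simp: x_def rD A_rate)
  have x0r: "x 0 = r" by (simp add: x_def)
  have mono1: "f (x (Suc k)) \<le> f (x k)" for k
    by (simp add: x_def)
  have mono: "f (x j) \<le> f (x k)" if "k \<le> j" for j k
    using that
  proof (induction j rule: dec_induct)
    case base then show ?case by simp
  next
    case (step j) then show ?case using mono1[of j] by linarith
  qed
  have leA: "f (x k) \<le> f (A r k)" if "k \<ge> 1" for k
  proof -
    define j where "j = k - 1"
    have k: "k = Suc j" using that by (simp add: j_def)
    show ?thesis unfolding k x_def by auto
  qed
  have mu_pos: "mu > 0" using A_i[OF rho_pos] by (simp add: mu_def)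
  have dist_bd: "(distN N D f r)\<^sup>2 \<le> 2 / mu * (f r - fs)"
  proof -
    have "mu / 2 * (distN N D f r)\<^sup>2 \<le> f r - fs"
      using A_i[OF rho_pos] r_in by (simp add: mu_def fs_def)
    then show ?thesis using mu_pos by (simp add: field_simps)
  qed
  have h0: "f r - fs \<ge> 0" using fs_le[OF rD] by simp
  have nb_ge: "nb \<ge> 1/2" by (simp add: nb_def nbar_def)
  have nb_sq: "2 * a / mu \<le> nb\<^sup>2"
  proof -
    have "sqrt (2 * a / mu) \<le> nb" by (simp add: nb_def nbar_def mu_def)
    moreover have "sqrt (2 * a / mu) \<ge> 0" using a_pos mu_pos by simp
    ultimately have "(sqrt (2 * a / mu))\<^sup>2 \<le> nb\<^sup>2" by (rule power_mono)
    moreover have "0 \<le> 2 * a / mu" using a_pos mu_pos by simp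
    ultimately show ?thesis by simp
  qed
  have rate: "f (x k) - fs \<le> (nb / (real k + 1))\<^sup>2 * (f r - fs)" if "k \<ge> 1" for k
  proof -
    have "f (x k) - fs \<le> f (A r k) - fs" using leA[OF that] by simp
    also have "\<dots> \<le> a / (real k + 1)\<^sup>2 * (distN N D f r)\<^sup>2"
      using A_rate[OF rD that] by (simp add: fs_def)
    also have "\<dots> \<le> a / (real k + 1)\<^sup>2 * (2 / mu * (f r - fs))"
      by (rule mult_left_mono[OF dist_bd]) (use a_pos in simp)
    also have "\<dots> = (2 * a / mu) / (real k + 1)\<^sup>2 * (f r - fs)" using mu_pos by (simp add: field_simps)
    also have "\<dots> \<le> nb\<^sup>2 / (real k + 1)\<^sup>2 * (f r - fs)"
      by (rule mult_right_mono[OF divide_right_mono[OF nb_sq]]) (use h0 in auto)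
    also have "\<dots> = (nb / (real k + 1))\<^sup>2 * (f r - fs)" by (simp add: power_divide)
    finally show ?thesis .
  qed
  have stop_big: "Ad_stop f A r n k" if k1: "k \<ge> 1" and kn: "n \<le> real k" and kb: "4 * nb \<le> real k" for k
  proof -
    define l where "l = k div 2"
    have l1: "l \<ge> 1"
    proof (rule ccontr)
      assume "\<not> l \<ge> 1"
      then have "k \<le> 1" by (simp add: l_def)
      then show False using kb nb_ge by linarith
    qed
    have "k \<le> 2 * l + 1" unfolding l_def by presburger
    then have "real k \<le> 2 * real l + 1" by linarith
    then have "2 * nb \<le> real l + 1" using kb by linarith
    then have q: "nb / (real l + 1) \<le> 1/2" using nb_ge by (simp add: field_simps)
    have "(nb / (real l + 1))\<^sup>2 \<le> (1/2)\<^sup>2"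
      by (rule power_mono[OF q]) (use nb_ge in simp)
    then have "(nb / (real l + 1))\<^sup>2 * (f r - fs) \<le> 1/4 * (f r - fs)"
      using h0 by (intro mult_right_mono) (auto simp: power2_eq_square)
    then have hl: "f (x l) - fs \<le> 1/4 * (f r - fs)" using rate[OF l1] by linarith
    have hk: "f (x k) \<ge> fs" using fs_le[OF xD] .
    show ?thesis unfolding Ad_stop_def using k1 kn hl hk x0r
      by (simp add: x_def[symmetric] l_def[symmetric])
  qed
  define K where "K = max (1::nat) (max (nat \<lceil>n\<rceil>) (nat \<lceil>4 * nb\<rceil>))"
  have exK: "Ad_stop f A r n K"
  proof (rule stop_big)
    show "1 \<le> K" by (simp add: K_def)
    have "nat \<lceil>n\<rceil> \<le> K" unfolding K_def by (metis max.cobounded1 max.coboundedI2)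
    then have "real (nat \<lceil>n\<rceil>) \<le> real K" by (rule of_nat_mono)
    then show "n \<le> real K" by linarith
    have "nat \<lceil>4 * nb\<rceil> \<le> K" unfolding K_def by (metis max.cobounded2 max.coboundedI2)
    then have "real (nat \<lceil>4 * nb\<rceil>) \<le> real K" by (rule of_nat_mono)
    then show "4 * nb \<le> real K" by linarith
  qed
  then have ex: "\<exists>k. Ad_stop f A r n k" by blast
  define m where "m = Ad_m f A r n"
  have stm: "Ad_stop f A r n m" unfolding m_def Ad_m_def by (rule LeastI[where P="\<lambda>k. Ad_stop f A r n k", OF exK])
  have m1: "m \<ge> 1" and mn: "n \<le> real m" using stm by (auto simp: Ad_stop_def)
  have z: "Ad_z f A r n = x m" by (simp add: Ad_z_def x_def m_def)
  have p1: "f (x m) \<le> f r - 1 / (2 * L) * (dual_norm N (g r))\<^sup>2"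
  proof -
    have "f (x m) \<le> f (x 1)" using mono[OF m1] .
    also have "\<dots> \<le> f (A r 1)" using leA by simp
    also have "\<dots> \<le> f r - 1 / (2 * L) * (dual_norm N (g r))\<^sup>2" using A_descent[OF rD] by simp
    finally show ?thesis .
  qed
  have p3: "real m \<le> real_of_int \<lceil>4 * nb\<rceil>"
    if "0 < n" "n \<le> real_of_int \<lceil>4 * nb\<rceil>"
  proof -
    define K' where "K' = nat \<lceil>4 * nb\<rceil>"
    have rK: "real K' = real_of_int \<lceil>4 * nb\<rceil>" unfolding K'_def using nb_ge by simp
    have "Ad_stop f A r n K'"
    proof (rule stop_big)
      show "1 \<le> K'" using rK nb_ge by linarith
      show "n \<le> real K'" using rK that by linarith
      show "4 * nb \<le> real K'" using rK by linarith
    qed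
    then have "m \<le> K'" unfolding m_def Ad_m_def by (rule Least_le[where P="\<lambda>k. Ad_stop f A r n k"])
    then show ?thesis using rK by simp
  qed
  show ?thesis
    using ex p1 rate[OF m1] mn p3
    by (simp add: z m_def[symmetric] nb_def[symmetric] fs_def[symmetric])
qed

end
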